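(* Let $G$ be a disk graph with parameter $r$ on a finite point set in the plane. For every two crossing edges of $G$, the four endpoints are pairwise at Euclidean distance at most $2r$; moreover, one of the four endpoints is within distance $r$ of each of the other three.
   Context: The disk graph on a point set $P$ with parameter $r$ is the geometric graph with vertex set $P$ having a straight-line edge between $p,q\in P$ iff $|pq|\le r$. Two line segments cross if they have a common point that is interior to both. *)

theory Defs
  imports "HOL-Analysis.Analysis"
begin

definition disk_graph_edge :: "(real^2) set \<Rightarrow> real \<Rightarrow> real^2 \<Rightarrow> real^2 \<Rightarrow> bool" where
  "disk_graph_edge P r p q \<longleftrightarrow> p \<in> P \<and> q \<in> P \<and> p \<noteq> q \<and> dist p q \<le> r"

definition segments_cross :: "real^2 \<Rightarrow> real^2 \<Rightarrow> real^2 \<Rightarrow> real^2 \<Rightarrow> bool" where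
  "segments_cross a b c d \<longleftrightarrow> open_segment a b \<inter> open_segment c d \<noteq> {}"

end

theory Submission
  imports Defs
begin

theorem corollary2:
  fixes P :: "(real^2) set" and r :: real and p q s t :: "real^2"
  assumes "finite P"
    and "disk_graph_edge P r p q" and "disk_graph_edge P r s t"
    and "{p, q} \<noteq> {s, t}"
    and "segments_cross p q s t"
  shows "(\<forall>x\<in>{p, q, s, t}. \<forall>y\<in>{p, q, s, t}. dist x y \<le> 2 * r)
       \<and> (\<exists>z\<in>{p, q, s, t}. \<forall>w\<in>{p, q, s, t}. dist z w \<le> r)"
proof -
  obtain x where x1: "x \<in> open_segment p q" and x2: "x \<in> open_segment s t"
    using assms(5) unfolding segments_cross_def by blast
  have e1: "dist p q = dist p x + dist x q"
    using open_closed_segment[OF x1] between between_mem_segment by metis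
  have e2: "dist s t = dist s x + dist x t"
    using open_closed_segment[OF x2] between between_mem_segment by metis
  have r1: "dist p q \<le> r" and r2: "dist s t \<le> r"
    using assms(2,3) unfolding disk_graph_edge_def by auto
  have c: "dist x p = dist p x" "dist x q = dist q x" "dist x s = dist s x" "dist x t = dist t x"
    by (simp_all add: dist_commute)
  have T: "\<And>a b. dist a b \<le> dist a x + dist x b" by (rule dist_triangle)
  have T2: "\<And>a b. dist a b \<le> dist x a + dist x b" by (simp add: dist_triangle3)
  have d0: "0 \<le> dist p x" "0 \<le> dist q x" "0 \<le> dist s x" "0 \<le> dist t x" by auto
  have rpos: "0 \<le> r" using r1 zero_le_dist[of p q] by linarith
  have A: "\<forall>a\<in>{p, q, s, t}. \<forall>b\<in>{p, q, s, t}. dist a b \<le> 2 * r"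
  proof (intro ballI)
    fix a b assume ab: "a \<in> {p, q, s, t}" "b \<in> {p, q, s, t}"
    have X: "dist x a \<le> r" if "a \<in> {p,q,s,t}" for a
      proof -
        have "dist p x \<le> r" "dist q x \<le> r" "dist s x \<le> r" "dist t x \<le> r"
          using e1 e2 r1 r2 c d0 by linarith+
        then show ?thesis using that c by auto
      qed
    show "dist a b \<le> 2 * r" using T2[of a b] X[OF ab(1)] X[OF ab(2)] by linarith
  qed
  have B: "\<exists>z\<in>{p, q, s, t}. \<forall>w\<in>{p, q, s, t}. dist z w \<le> r"
  proof -
    have "dist p x \<le> dist s x \<and> dist p x \<le> dist t x \<or> dist q x \<le> dist s x \<and> dist q x \<le> dist t x
       \<or> dist s x \<le> dist p x \<and> dist s x \<le> dist q x \<or> dist t x \<le> dist p x \<and> dist t x \<le> dist q x"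
      by linarith
    then show ?thesis
    proof (elim disjE)
      assume h: "dist p x \<le> dist s x \<and> dist p x \<le> dist t x"
      have "\<forall>w\<in>{p, q, s, t}. dist p w \<le> r"
        using h T[of p s] T[of p t] e1 e2 r1 r2 c d0 rpos by auto
      then show ?thesis by blast
    next
      assume h: "dist q x \<le> dist s x \<and> dist q x \<le> dist t x"
      have "\<forall>w\<in>{p, q, s, t}. dist q w \<le> r"
        using h T[of q s] T[of q t] e1 e2 r1 r2 c d0 rpos dist_commute[of q p] by auto
      then show ?thesis by blast
    next
      assume h: "dist s x \<le> dist p x \<and> dist s x \<le> dist q x"
      have "\<forall>w\<in>{p, q, s, t}. dist s w \<le> r"
        using h T[of s p] T[of s q] e1 e2 r1 r2 c d0 rpos by auto
      then show ?thesis by blast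
    next
      assume h: "dist t x \<le> dist p x \<and> dist t x \<le> dist q x"
      have "\<forall>w\<in>{p, q, s, t}. dist t w \<le> r"
        using h T[of t p] T[of t q] e1 e2 r1 r2 c d0 rpos dist_commute[of t s] by auto
      then show ?thesis by blast
    qed
  qed
  show ?thesis using A B by blast
qed

end
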